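(* Let $S$, $\Phi$, $v$, $\hat S$, $S_\theta$ and $\theta_0$ be as in the context. Let $w=(w_0w_1\dots)\in\Sigma$ be such that $x=\Phi(w)\in\hat S$. Then for every $n$ the three points $\psi_{w_0\dots w_n}(\bar A),\psi_{w_0\dots w_n}(\bar B),\psi_{w_0\dots w_n}(\bar C)$ can be labelled $A_{w,n},B_{w,n},C_{w,n}$ in such a way that: (1) as $n\to\infty$, $$\frac{\max\big(\|P^\perp_{v(x)}(A_{w,n}-B_{w,n})\|,\ \|P^\perp_{v(x)}(B_{w,n}-C_{w,n})\|,\ \|P^\perp_{v(x)}(C_{w,n}-A_{w,n})\|\big)}{\|P_{v(x)}(A_{w,n}-B_{w,n})\|}\longrightarrow0;$$ (2) if $\theta\in(0,\theta_0]$ and $x\in\psi_{w_0\dots w_{n_k}}(S_\theta)$ for a sequence $n_k\nearrow+\infty$, then as $k\to\infty$ $$\max\Big(\frac{\|P^\perp_{v(x)}(x-A_{w,n_k})\|}{\|P_{v(x)}(x-A_{w,n_k})\|},\ \frac{\|P^\perp_{v(x)}(x-B_{w,n_k})\|}{\|P_{v(x)}(x-B_{w,n_k})\|}\Big)\longrightarrow0.$$ (Neither limit is asserted to be uniform in $x$.)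
   Context: Let $T_1=\begin{pmatrix}3/5&0\\0&1/5\end{pmatrix}$, $T_2=\begin{pmatrix}3/10&\sqrt3/10\\ \sqrt3/10&1/2\end{pmatrix}$, $T_3=\begin{pmatrix}3/10&-\sqrt3/10\\ -\sqrt3/10&1/2\end{pmatrix}$, $\bar A=(0,0)$, $\bar B=(1,1/\sqrt3)$, $\bar C=(1,-1/\sqrt3)$, $\psi_1(x)=\bar A+T_1(x-\bar A)$, $\psi_2(x)=\bar B+T_2(x-\bar B)$, $\psi_3(x)=\bar C+T_3(x-\bar C)$; the harmonic Sierpinski gasket $S$ is the unique nonempty compact set with $S=\bigcup_i\psi_i(S)$. Let $\Sigma=\{1,2,3\}^{\mathbb N}$, $\psi_{w_0\dots w_l}=\psi_{w_0}\circ\cdots\circ\psi_{w_l}$ (affine with constant derivative $D\psi_{w_0\dots w_l}$), and $\Phi:\Sigma\to S$, $\Phi(w)=$ the unique point of $\bigcap_l\psi_{w_0\dots w_l}(\triangle)$, $\triangle$ the closed triangle $\bar A\bar B\bar C$. Points with more than one coding are exactly those in the countable set $N=\{\psi_{w_0\dots w_l}(P): l\ge0,\ w\in\Sigma,\ P\in\{\bar A,\bar B,\bar C\}\}$. For a unit vector $v$, $P_v$ is orthogonal projection onto $\mathbb Rv$ and $P_v^\perp=I-P_v$; $\|A\|_{HS}^2=\mathrm{tr}({}^tAA)$. Kusuoka's measure: with $(\mathcal LA)(x)=\sum_i{}^tD\psi_iA_{\psi_i(x)}D\psi_i$ on continuous symmetric-matrix fields, having simple positive eigenvalue $\beta$,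 let $\tau$ be the unique semipositive-definite symmetric-matrix-valued Borel measure on $S$ with $\mathrm{tr}\,\tau(S)=1$ and $\mathcal L^*\tau=\beta\tau$ ($\tau(S)$ is a positive multiple of $Id$); $\kappa(E)=\mathrm{tr}\,\tau(E)$ is a non-atomic probability measure. There is a Borel field of unit vectors $v$ with $\tau=P_{v(x)}\kappa$. Let $\tilde S$ be the Borel set of $x=\Phi(w)\in S$ at which $P_{v(x)}=\lim_{l\to\infty}D\psi_{w_0\dots w_{l-1}}{}^tD\psi_{w_0\dots w_{l-1}}/\|D\psi_{w_0\dots w_{l-1}}\|_{HS}^2$ holds; $\kappa(\tilde S)=1$. Set $\hat S=\tilde S\setminus N$; $\kappa(\hat S)=1$. Geodesics: $AC^2([0,1],S)$ is the set of absolutely continuous $\gamma:[0,1]\to\mathbb R^2$ with $\gamma_s\in S$ for all $s$ and $\int_0^1\|\dot\gamma_s\|^2ds<\infty$. For $x,y\in S$ there is a unique minimizer $\gamma_{x,y}$ of $\int_0^1\|\dot\gamma_s\|^2ds$ among such curves with $\gamma_0=x,\gamma_1=y$. Let $M=\gamma_{\bar A\bar B}([0,1])\cup\gamma_{\bar B\bar C}([0,1])\cup\gamma_{\bar A\bar C}([0,1])$, and for $\theta>0$ let $S_\theta=\{x\in S: d(x,M)\ge\theta\}$, $d$ the Euclidean distance. It is known that $\kappa(M)=0$ and there is $\theta_0>0$ such that $S_\theta\ne\emptyset$ for $\theta\in(0,\theta_0]$. *)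

theory Defs
  imports "HOL-Analysis.Analysis"
begin

(* Points of the plane are real^2, 2x2 matrices are real^2^2 (row-major: A$i$j). *)

datatype idx = I1 | I2 | I3

definition T :: "idx \<Rightarrow> real^2^2" where
  "T i = (case i of
      I1 \<Rightarrow> vector [vector [3/5, 0], vector [0, 1/5]]
    | I2 \<Rightarrow> vector [vector [3/10, sqrt 3/10], vector [sqrt 3/10, 1/2]]
    | I3 \<Rightarrow> vector [vector [3/10, - sqrt 3/10], vector [- sqrt 3/10, 1/2]])"

definition vtx :: "idx \<Rightarrow> real^2" where
  "vtx i = (case i of
      I1 \<Rightarrow> vector [0, 0]
    | I2 \<Rightarrow> vector [1, 1 / sqrt 3]
    | I3 \<Rightarrow> vector [1, - 1 / sqrt 3])"

definition psi :: "idx \<Rightarrow> real^2 \<Rightarrow> real^2" where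
  "psi i x = vtx i + T i *v (x - vtx i)"

definition HSG :: "(real^2) set" where
  "HSG = (THE K. K \<noteq> {} \<and> compact K \<and> K = (\<Union>i. psi i ` K))"

(* psiw w n = psi_{w_0} o ... o psi_{w_{n-1}} (identity for n = 0);
   so psi_{w_0...w_l} = psiw w (Suc l) *)
fun psiw :: "(nat \<Rightarrow> idx) \<Rightarrow> nat \<Rightarrow> real^2 \<Rightarrow> real^2" where
  "psiw w 0 = id"
| "psiw w (Suc n) = psiw w n \<circ> psi (w n)"

(* Dw w n = D psi_{w_0...w_{n-1}} = T_{w_0} ... T_{w_{n-1}} (chain rule; identity for n = 0) *)
fun Dw :: "(nat \<Rightarrow> idx) \<Rightarrow> nat \<Rightarrow> real^2^2" where
  "Dw w 0 = mat 1"
| "Dw w (Suc n) = Dw w n ** T (w n)"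

definition triangle :: "(real^2) set" where
  "triangle = convex hull (range vtx)"

definition Phi :: "(nat \<Rightarrow> idx) \<Rightarrow> real^2" where
  "Phi w = (THE p. (\<Inter>l. psiw w (Suc l) ` triangle) = {p})"

definition Nset :: "(real^2) set" where
  "Nset = {psiw w (Suc l) (vtx i) | w l i. True}"

definition projmat :: "real^2 \<Rightarrow> real^2^2" where
  "projmat v = (\<chi> i j. v$i * v$j)"

definition projP :: "real^2 \<Rightarrow> real^2 \<Rightarrow> real^2" where
  "projP v y = (y \<bullet> v) *\<^sub>R v"

definition projPerp :: "real^2 \<Rightarrow> real^2 \<Rightarrow> real^2" where
  "projPerp v y = y - projP v y"

definition hs_sq :: "real^2^2 \<Rightarrow> real" where
  "hs_sq A = trace (transpose A ** A)"

definition Lop :: "(real^2 \<Rightarrow> real^2^2) \<Rightarrow> real^2 \<Rightarrow> real^2^2" where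
  "Lop A x = (\<Sum>i\<in>UNIV. transpose (T i) ** A (psi i x) ** T i)"

(* Pairing <tau, A> = \<integral> tr(A d tau) for the matrix measure tau = P_v kappa *)
definition pairing :: "(real^2) measure \<Rightarrow> (real^2 \<Rightarrow> real^2) \<Rightarrow> (real^2 \<Rightarrow> real^2^2) \<Rightarrow> real" where
  "pairing \<kappa> v A = (\<integral>x\<in>HSG. trace (projmat (v x) ** A x) \<partial>\<kappa>)"

(* The positive eigenvalue beta of L: L(Id) = (3/5) Id for the constant field Id. *)
definition beta :: real where "beta = 3/5"

(* (kappa, v) describes Kusuoka's measure: tau = P_v kappa is a semipositive symmetric
   matrix-valued Borel measure on S, tr tau(S) = kappa(S) = 1, and L^* tau = beta tau,
   i.e. <tau, L A> = beta <tau, A> for all continuous symmetric-matrix fields A on S;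
   v is a Borel field of unit vectors. *)
definition kusuoka_pair :: "(real^2) measure \<Rightarrow> (real^2 \<Rightarrow> real^2) \<Rightarrow> bool" where
  "kusuoka_pair \<kappa> v \<longleftrightarrow>
     sets \<kappa> = sets borel \<and> emeasure \<kappa> UNIV = 1 \<and> emeasure \<kappa> (UNIV - HSG) = 0 \<and>
     v \<in> borel_measurable borel \<and> (\<forall>x\<in>HSG. norm (v x) = 1) \<and>
     (\<forall>A. continuous_on HSG A \<and> (\<forall>x\<in>HSG. transpose (A x) = A x) \<longrightarrow>
          pairing \<kappa> v (Lop A) = beta * pairing \<kappa> v A)"

definition Stilde :: "(real^2 \<Rightarrow> real^2) \<Rightarrow> (real^2) set" where
  "Stilde v = {x \<in> HSG. \<exists>w. x = Phi w \<and>
      (\<lambda>l. (1 / hs_sq (Dw w l)) *\<^sub>R (Dw w l ** transpose (Dw w l))) \<longlonglongrightarrow> projmat (v x)}"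

definition Shat :: "(real^2 \<Rightarrow> real^2) \<Rightarrow> (real^2) set" where
  "Shat v = Stilde v - Nset"

definition abs_cont01 :: "(real \<Rightarrow> real^2) \<Rightarrow> bool" where
  "abs_cont01 \<gamma> \<longleftrightarrow> (\<forall>\<epsilon>>0. \<exists>\<delta>>0. \<forall>n (a::nat\<Rightarrow>real) b.
      (\<forall>k<n. 0 \<le> a k \<and> a k \<le> b k \<and> b k \<le> 1) \<and>
      (\<forall>k<n. \<forall>j<n. k \<noteq> j \<longrightarrow> b k \<le> a j \<or> b j \<le> a k) \<and>
      (\<Sum>k<n. b k - a k) < \<delta> \<longrightarrow>
      (\<Sum>k<n. norm (\<gamma> (b k) - \<gamma> (a k))) < \<epsilon>)"

definition velocity :: "(real \<Rightarrow> real^2) \<Rightarrow> real \<Rightarrow> real^2" where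
  "velocity \<gamma> s = vector_derivative \<gamma> (at s within {0..1})"

definition AC2 :: "(real \<Rightarrow> real^2) \<Rightarrow> bool" where
  "AC2 \<gamma> \<longleftrightarrow> abs_cont01 \<gamma> \<and> (\<forall>s\<in>{0..1}. \<gamma> s \<in> HSG) \<and>
     (\<lambda>s. (norm (velocity \<gamma> s))\<^sup>2) integrable_on {0..1}"

definition energy :: "(real \<Rightarrow> real^2) \<Rightarrow> real" where
  "energy \<gamma> = integral {0..1} (\<lambda>s. (norm (velocity \<gamma> s))\<^sup>2)"

definition is_geodesic :: "real^2 \<Rightarrow> real^2 \<Rightarrow> (real \<Rightarrow> real^2) \<Rightarrow> bool" where
  "is_geodesic x y \<gamma> \<longleftrightarrow> AC2 \<gamma> \<and> \<gamma> 0 = x \<and> \<gamma> 1 = y \<and>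
     (\<forall>\<eta>. AC2 \<eta> \<and> \<eta> 0 = x \<and> \<eta> 1 = y \<longrightarrow> energy \<gamma> \<le> energy \<eta>)"

(* gamma_{x,y}([0,1]); the minimizer is unique as a curve on [0,1] *)
definition geod_image :: "real^2 \<Rightarrow> real^2 \<Rightarrow> (real^2) set" where
  "geod_image x y = (THE G. \<exists>\<gamma>. is_geodesic x y \<gamma> \<and> G = \<gamma> ` {0..1})"

definition Mset :: "(real^2) set" where
  "Mset = geod_image (vtx I1) (vtx I2) \<union> geod_image (vtx I2) (vtx I3) \<union> geod_image (vtx I1) (vtx I3)"

definition S_theta :: "real \<Rightarrow> (real^2) set" where
  "S_theta \<theta> = {x \<in> HSG. infdist x Mset \<ge> \<theta>}"

end

theory Submission
  imports Defs
begin

lemma s3sq[simp]: "sqrt 3 * sqrt 3 = (3::real)" by simp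
lemma s3pos[simp]: "sqrt 3 > (0::real)" by simp

lemma mv2: "((A::real^2^2) *v x) $ i = A$i$1 * x$1 + A$i$2 * x$2"
  by (simp add: matrix_vector_mult_def sum_2)

lemma vtx_c[simp]:
  "vtx I1 $ 1 = 0" "vtx I1 $ 2 = 0" "vtx I2 $ 1 = 1" "vtx I2 $ 2 = 1/sqrt 3"
  "vtx I3 $ 1 = 1" "vtx I3 $ 2 = - 1/sqrt 3"
  by (simp_all add: vtx_def)

lemma T_c[simp]:
  "T I1 $1$1 = 3/5" "T I1 $1$2 = 0" "T I1 $2$1 = 0" "T I1 $2$2 = 1/5"
  "T I2 $1$1 = 3/10" "T I2 $1$2 = sqrt 3/10" "T I2 $2$1 = sqrt 3/10" "T I2 $2$2 = 1/2"
  "T I3 $1$1 = 3/10" "T I3 $1$2 = - sqrt 3/10" "T I3 $2$1 = - sqrt 3/10" "T I3 $2$2 = 1/2"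
  by (simp_all add: T_def)

lemma psi_c: "psi i y $ k = vtx i $ k + T i $k$1 * (y$1 - vtx i $1) + T i $k$2 * (y$2 - vtx i $2)"
  by (simp add: psi_def mv2)

definition bc :: "idx \<Rightarrow> real^2 \<Rightarrow> real" where
  "bc i y = (case i of I1 \<Rightarrow> 1 - y$1 | I2 \<Rightarrow> (y$1 + sqrt 3 * y$2)/2 | I3 \<Rightarrow> (y$1 - sqrt 3 * y$2)/2)"

lemma bc_sum: "bc I1 y + bc I2 y + bc I3 y = 1"
  by (simp add: bc_def field_simps)

lemma vec2_eq: "(x::real^2) = y \<longleftrightarrow> x$1 = y$1 \<and> x$2 = y$2"
  by (metis exhaust_2 vec_eq_iff)

lemma bc_recon: "y = bc I1 y *\<^sub>R vtx I1 + bc I2 y *\<^sub>R vtx I2 + bc I3 y *\<^sub>R vtx I3"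
  unfolding vec2_eq bc_def by (simp add: field_simps)

lemma bc_eqI: "(\<forall>i. bc i y = bc i z) \<Longrightarrow> y = z"
  by (metis bc_recon)

lemma bc_psi: "bc j (psi i y) = (if j = i then bc i y + 2/5*(1 - bc i y) else 2/5 * bc j y + 1/5 * (1 - bc i y - bc j y))"
  by (cases i; cases j; simp add: bc_def psi_c field_simps)

lemma s3sq2[simp]: "sqrt 3 * (sqrt 3 * x) = (3::real) * x"
  by (simp add: mult.assoc[symmetric])

lemma range_vtx: "range vtx = {vtx I1, vtx I2, vtx I3}"
  by (auto, metis idx.exhaust)

lemma tri_iff: "y \<in> triangle \<longleftrightarrow> (\<forall>i. bc i y \<ge> 0)"
proof
  assume "y \<in> triangle"
  then obtain u v w where uvw: "0 \<le> u" "0 \<le> v" "0 \<le> w" "u + v + w = 1"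
    "y = u *\<^sub>R vtx I1 + v *\<^sub>R vtx I2 + w *\<^sub>R vtx I3"
    unfolding triangle_def range_vtx convex_hull_3 by blast
  have "bc I1 y = u" "bc I2 y = v" "bc I3 y = w"
    using uvw(4) by (simp_all add: uvw(5) bc_def field_simps)
  then show "\<forall>i. bc i y \<ge> 0" using uvw by (metis idx.exhaust)
next
  assume "\<forall>i. bc i y \<ge> 0"
  then show "y \<in> triangle"
    unfolding triangle_def range_vtx convex_hull_3
    using bc_recon[of y] bc_sum[of y] by blast
qed

lemma bc_rest: "\<forall>k. bc k y \<ge> 0 \<Longrightarrow> i \<noteq> j \<Longrightarrow> 1 - bc i y - bc j y \<ge> 0"
  using bc_sum[of y] by (cases i; cases j; auto; smt (verit, best))

lemma bc_le1: "\<forall>k. bc k y \<ge> 0 \<Longrightarrow> bc i y \<le> 1"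
  using bc_sum[of y] by (cases i; auto; smt (verit, best))

lemma psi_tri: "y \<in> triangle \<Longrightarrow> psi i y \<in> triangle"
  unfolding tri_iff bc_psi
proof (intro allI)
  fix j assume h: "\<forall>k. 0 \<le> bc k y"
  show "0 \<le> (if j = i then bc i y + 2/5*(1 - bc i y) else 2/5 * bc j y + 1/5 * (1 - bc i y - bc j y))"
    using h bc_rest[OF h, of i j] bc_le1[OF h, of i] by auto
qed

lemma normsq2: "(norm (z::real^2))^2 = z$1^2 + z$2^2"
  by (simp only: power2_norm_eq_inner) (simp add: inner_vec_def sum_2 power2_eq_square)

lemma T_sq: "(norm (T i *v z))^2 \<le> (3/5)^2 * (norm z)^2 \<and> (1/5)^2 * (norm z)^2 \<le> (norm (T i *v z))^2"
proof -
  have a: "(norm (T i *v z))^2 = 9/25 * (norm z)^2 - (case i of I1 \<Rightarrow> 8/25 * z$2^2 | I2 \<Rightarrow> 2/25 * (sqrt 3 * z$1 - z$2)^2 | I3 \<Rightarrow> 2/25 * (sqrt 3 * z$1 + z$2)^2)"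
    unfolding normsq2 by (cases i; simp add: mv2 power2_eq_square algebra_simps)
  have b: "(norm (T i *v z))^2 = 1/25 * (norm z)^2 + (case i of I1 \<Rightarrow> 8/25 * z$1^2 | I2 \<Rightarrow> 2/25 * (z$1 + sqrt 3 * z$2)^2 | I3 \<Rightarrow> 2/25 * (z$1 - sqrt 3 * z$2)^2)"
    unfolding normsq2 by (cases i; simp add: mv2 power2_eq_square algebra_simps)
  show ?thesis using a b zero_le_power2[of "z$1"] zero_le_power2[of "z$2"]
    zero_le_power2[of "z$1 + sqrt 3 * z$2"] zero_le_power2[of "z$1 - sqrt 3 * z$2"]
    zero_le_power2[of "sqrt 3 * z$1 + z$2"] zero_le_power2[of "sqrt 3 * z$1 - z$2"]
    by (cases i; simp add: power_divide; linarith)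
qed

lemma T_le: "norm (T i *v z) \<le> 3/5 * norm z"
proof -
  have "(norm (T i *v z))^2 \<le> (3/5 * norm z)^2" using T_sq[of i z] power_mult_distrib[of "3/5::real" "norm z" 2] by linarith
  then show ?thesis by (rule power2_le_imp_le) simp
qed

lemma T_ge: "1/5 * norm z \<le> norm (T i *v z)"
proof -
  have "(1/5 * norm z)^2 \<le> (norm (T i *v z))^2" using T_sq[of i z] power_mult_distrib[of "1/5::real" "norm z" 2] by linarith
  then show ?thesis by (rule power2_le_imp_le) simp
qed

lemma psi_diff: "psi i y - psi i z = T i *v (y - z)"
  by (simp add: psi_def matrix_vector_mult_diff_distrib)

lemma psiw_diff: "psiw w n y - psiw w n z = Dw w n *v (y - z)"
proof (induction n arbitrary: y z)
  case 0 then show ?case by simp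
next
  case (Suc n)
  have "psiw w (Suc n) y - psiw w (Suc n) z = Dw w n *v (psi (w n) y - psi (w n) z)"
    using Suc by simp
  also have "\<dots> = Dw w (Suc n) *v (y - z)"
    by (simp add: psi_diff matrix_vector_mul_assoc)
  finally show ?case .
qed

lemma psi_dist: "dist (psi i y) (psi i z) \<le> 3/5 * dist y z"
  using T_le[of i "y - z"] by (simp add: dist_norm psi_diff)

lemma psiw_dist: "dist (psiw w n y) (psiw w n z) \<le> (3/5)^n * dist y z"
proof (induction n arbitrary: y z)
  case 0 then show ?case by simp
next
  case (Suc n)
  have "dist (psiw w (Suc n) y) (psiw w (Suc n) z) \<le> (3/5)^n * dist (psi (w n) y) (psi (w n) z)"
    using Suc by simp
  also have "\<dots> \<le> (3/5)^n * (3/5 * dist y z)"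
    by (rule mult_left_mono[OF psi_dist]) simp
  finally show ?case by simp
qed

lemma psi_inj: "psi i y = psi i z \<Longrightarrow> y = z"
proof -
  assume "psi i y = psi i z"
  then have "T i *v (y - z) = 0" using psi_diff[of i y z] by simp
  then have "norm (y - z) \<le> 0" using T_ge[of "y - z" i] by simp
  then show "y = z" by simp
qed

lemma psiw_inj: "psiw w n y = psiw w n z \<Longrightarrow> y = z"
  by (induction n arbitrary: y z) (auto dest: psi_inj)

lemma psiw_cong: "(\<forall>k<n. w k = w' k) \<Longrightarrow> psiw w n = psiw w' n"
  by (induction n) auto

lemma psiw_cons: "psi i \<circ> psiw w n = psiw (case_nat i w) (Suc n)"
proof (induction n)
  case 0 then show ?case by simp
next
  case (Suc n)
  have "psi i \<circ> psiw w (Suc n) = (psi i \<circ> psiw w n) \<circ> psi (w n)" by (simp add: comp_assoc)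
  also have "\<dots> = psiw (case_nat i w) (Suc n) \<circ> psi (w n)" by (simp only: Suc.IH)
  also have "\<dots> = psiw (case_nat i w) (Suc (Suc n))" by simp
  finally show ?case .
qed

lemma psiw_Suc_left: "psiw w (Suc n) = psi (w 0) \<circ> psiw (\<lambda>k. w (Suc k)) n"
proof -
  have "w = case_nat (w 0) (\<lambda>k. w (Suc k))" by (rule ext) (simp split: nat.split)
  then show ?thesis using psiw_cons[of "w 0" "\<lambda>k. w (Suc k)" n] by simp
qed

lemma psi_cont: "continuous_on S (psi i)"
proof -
  have "continuous_on S ((*v) (T i) \<circ> (\<lambda>x. x - vtx i))"
    by (intro continuous_on_compose continuous_intros)
  then have "continuous_on S (\<lambda>x. T i *v (x - vtx i))" by (simp add: o_def)
  then show ?thesis unfolding psi_def by (intro continuous_intros)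
qed

lemma psiw_cont: "continuous_on S (psiw w n)"
proof (induction n arbitrary: S)
  case 0 then show ?case by (simp add: continuous_on_id)
next
  case (Suc n)
  have "continuous_on S (psiw w n \<circ> psi (w n))"
    by (rule continuous_on_compose[OF psi_cont Suc.IH])
  then show ?case by simp
qed

lemma psiw_tri: "y \<in> triangle \<Longrightarrow> psiw w n y \<in> triangle"
  by (induction n arbitrary: y) (auto intro: psi_tri)

lemma psi_fix: "psi i (vtx i) = vtx i"
  by (simp add: psi_def)

lemma compact_tri: "compact triangle"
  unfolding triangle_def range_vtx by (rule finite_imp_compact_convex_hull) simp

lemma UNIV_idx: "(UNIV :: idx set) = {I1, I2, I3}"
  using idx.exhaust by auto

lemma finite_idx[simp]: "finite (UNIV :: idx set)"
  by (simp add: UNIV_idx)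

lemma vtx_tri: "vtx i \<in> triangle"
  unfolding triangle_def by (rule hull_inc) simp

lemma pow_small: "0 \<le> (d::real) \<Longrightarrow> 0 < e \<Longrightarrow> \<exists>n. (3/5)^n * d < e"
proof -
  assume "0 \<le> d" "0 < e"
  have "(\<lambda>n. (3/5::real)^n * d) \<longlonglongrightarrow> 0"
    by (intro tendsto_mult_left_zero LIMSEQ_realpow_zero) auto
  then have "eventually (\<lambda>n. (3/5::real)^n * d < e) sequentially"
    using \<open>0 < e\<close> by (rule order_tendstoD(2))
  then show ?thesis by (auto simp: eventually_sequentially)
qed

definition Orb :: "(real^2) set" where
  "Orb = {psiw w n (vtx i) | w n i. True}"

lemma Orb_tri: "Orb \<subseteq> triangle"
  unfolding Orb_def using psiw_tri vtx_tri by blast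

lemma K0_tri: "closure Orb \<subseteq> triangle"
  using Orb_tri compact_tri by (simp add: closure_minimal compact_imp_closed)

lemma K0_compact: "compact (closure Orb)"
  using K0_tri compact_tri
  by (meson bounded_subset compact_eq_bounded_closed closed_closure)

lemma vtx_Orb: "vtx i \<in> Orb"
  unfolding Orb_def by (rule CollectI, rule exI[of _ "\<lambda>_. I1"], rule exI[of _ 0]) auto

lemma K0_ne: "closure Orb \<noteq> {}"
  using vtx_Orb closure_subset by blast

lemma psi_Orb: "psi i ` Orb \<subseteq> Orb"
proof
  fix y assume "y \<in> psi i ` Orb"
  then obtain w n j where "y = psi i (psiw w n (vtx j))" unfolding Orb_def by blast
  then have "y = psiw (case_nat i w) (Suc n) (vtx j)"
    using psiw_cons[of i w n] by (metis comp_apply)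
  then show "y \<in> Orb" unfolding Orb_def by blast
qed

lemma Orb_psi: "Orb \<subseteq> (\<Union>i. psi i ` Orb)"
proof
  fix y assume "y \<in> Orb"
  then obtain w n j where y: "y = psiw w n (vtx j)" unfolding Orb_def by blast
  show "y \<in> (\<Union>i. psi i ` Orb)"
  proof (cases n)
    case 0
    then have "y = psi j (vtx j)" using y psi_fix by simp
    then show ?thesis using vtx_Orb by blast
  next
    case (Suc m)
    then have "y = psi (w 0) (psiw (\<lambda>k. w (Suc k)) m (vtx j))"
      using y Suc psiw_Suc_left[of w m] by (simp del: psiw.simps)
    moreover have "psiw (\<lambda>k. w (Suc k)) m (vtx j) \<in> Orb" unfolding Orb_def by blast
    ultimately show ?thesis by blast
  qed
qed

lemma K0_inv: "closure Orb = (\<Union>i. psi i ` closure Orb)"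
proof
  have cl: "closed (\<Union>i. psi i ` closure Orb)"
  proof -
    have "compact (psi i ` closure Orb)" for i by (rule compact_continuous_image[OF psi_cont K0_compact])
    then have "compact (\<Union>i\<in>UNIV. psi i ` closure Orb)" by (intro compact_UN finite_idx)
    then show ?thesis by (rule compact_imp_closed)
  qed
  have "(\<Union>i. psi i ` Orb) \<subseteq> (\<Union>i. psi i ` closure Orb)"
    by (rule UN_mono) (simp_all add: image_mono closure_subset)
  then have "Orb \<subseteq> (\<Union>i. psi i ` closure Orb)" using Orb_psi by (rule subset_trans[rotated])
  then show "closure Orb \<subseteq> (\<Union>i. psi i ` closure Orb)"
    using cl by (rule closure_minimal)
next
  show "(\<Union>i. psi i ` closure Orb) \<subseteq> closure Orb"
  proof (intro UN_least)
    fix i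
    show "psi i ` closure Orb \<subseteq> closure Orb"
      by (rule image_closure_subset[OF psi_cont]) (simp, rule subset_trans[OF psi_Orb closure_subset])
  qed
qed

lemma inv_psiw_sub: "K = (\<Union>i. psi i ` K) \<Longrightarrow> psiw w n ` K \<subseteq> K"
proof (induction n)
  case 0 then show ?case by simp
next
  case (Suc n)
  have a: "psi (w n) ` K \<subseteq> K" using Suc.prems by blast
  have "psiw w (Suc n) ` K = psiw w n ` (psi (w n) ` K)" by (simp add: image_comp)
  also have "\<dots> \<subseteq> psiw w n ` K" using a by (rule image_mono)
  finally show ?case using Suc by blast
qed

lemma inv_unique:
  assumes ne: "K \<noteq> {}" and cK: "compact K" and inv: "K = (\<Union>i. psi i ` K)"
  shows "K = closure Orb"
proof
  have clK: "closed K" using cK by (rule compact_imp_closed)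
  obtain p where p: "p \<in> K" using ne by blast
  have vK: "vtx j \<in> K" for j
  proof -
    have it: "(psi j ^^ n) p \<in> K" for n
    proof (induction n)
      case 0 then show ?case using p by simp
    next
      case (Suc n)
      have "psi j ` K \<subseteq> K" using inv by blast
      then show ?case using Suc by auto
    qed
    have dd: "dist ((psi j ^^ n) p) (vtx j) \<le> (3/5)^n * dist p (vtx j)" for n
    proof (induction n)
      case 0 then show ?case by simp
    next
      case (Suc n)
      have "dist ((psi j ^^ Suc n) p) (vtx j) = dist (psi j ((psi j ^^ n) p)) (psi j (vtx j))"
        by (simp add: psi_fix)
      also have "\<dots> \<le> 3/5 * dist ((psi j ^^ n) p) (vtx j)" by (rule psi_dist)
      also have "\<dots> \<le> 3/5 * ((3/5)^n * dist p (vtx j))" using Suc by simp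
      finally show ?case by simp
    qed
    have "vtx j \<in> closure K"
      unfolding closure_approachable
    proof (intro allI impI)
      fix e :: real assume "e > 0"
      then obtain n where "(3/5)^n * dist p (vtx j) < e" using pow_small by fastforce
      then show "\<exists>y\<in>K. dist y (vtx j) < e" using it dd by (meson le_less_trans)
    qed
    then show ?thesis using clK by simp
  qed
  have "Orb \<subseteq> K" unfolding Orb_def using inv_psiw_sub[OF inv] vK by blast
  then show "closure Orb \<subseteq> K" using clK by (rule closure_minimal)
next
  have clK: "closed K" using cK by (rule compact_imp_closed)
  obtain R where R: "\<forall>z\<in>K. dist (vtx I1) z \<le> R"
    using compact_imp_bounded[OF cK] bounded_any_center[of K "vtx I1"] by blast
  have dec: "\<exists>w z'. z' \<in> K \<and> z = psiw w n z'" if "z \<in> K" for z n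
  proof (induction n)
    case 0 then show ?case using that by auto
  next
    case (Suc n)
    then obtain w z' where z': "z' \<in> K" "z = psiw w n z'" by blast
    then obtain i z'' where "z'' \<in> K" "z' = psi i z''" using inv by blast
    moreover have "psiw (w(n := i)) n = psiw w n" by (rule psiw_cong) simp
    ultimately have "z = psiw (w(n := i)) (Suc n) z''" using z' by simp
    then show ?case using \<open>z'' \<in> K\<close> by blast
  qed
  show "K \<subseteq> closure Orb"
  proof
    fix z assume "z \<in> K"
    show "z \<in> closure Orb"
      unfolding closure_approachable
    proof (intro allI impI)
      fix e :: real assume "e > 0"
      have "R \<ge> 0" using R \<open>z \<in> K\<close> by (meson zero_le_dist order_trans)
      then obtain n where n: "(3/5)^n * R < e" using pow_small \<open>e > 0\<close> by blast
      obtain w z' where z': "z' \<in> K" "z = psiw w n z'" using dec \<open>z \<in> K\<close> by blast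
      have "dist (psiw w n (vtx I1)) z \<le> (3/5)^n * dist (vtx I1) z'"
        using z' psiw_dist by simp
      also have "\<dots> \<le> (3/5)^n * R" using R z' by simp
      finally have "dist (psiw w n (vtx I1)) z < e" using n by simp
      moreover have "psiw w n (vtx I1) \<in> Orb" unfolding Orb_def by blast
      ultimately show "\<exists>y\<in>Orb. dist y z < e" by blast
    qed
  qed
qed

lemma HSG_eq: "HSG = closure Orb"
proof -
  have "\<exists>!K. K \<noteq> {} \<and> compact K \<and> K = (\<Union>i. psi i ` K)"
  proof (rule ex1I[of _ "closure Orb"])
    show "closure Orb \<noteq> {} \<and> compact (closure Orb) \<and> closure Orb = (\<Union>i. psi i ` closure Orb)"
      using K0_ne K0_compact K0_inv by blast
  next
    fix K assume "K \<noteq> {} \<and> compact K \<and> K = (\<Union>i. psi i ` K)"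
    then show "K = closure Orb" by (elim conjE) (rule inv_unique)
  qed
  then have "HSG \<noteq> {} \<and> compact HSG \<and> HSG = (\<Union>i. psi i ` HSG)"
    unfolding HSG_def by (rule theI')
  then show ?thesis by (elim conjE) (rule inv_unique)
qed

lemma HSG_tri: "HSG \<subseteq> triangle"
  using HSG_eq K0_tri by simp

lemma HSG_inv: "HSG = (\<Union>i. psi i ` HSG)"
  using HSG_eq K0_inv by simp

lemma HSG_cell: "y \<in> HSG \<Longrightarrow> \<exists>i z. z \<in> triangle \<and> y = psi i z"
  using HSG_inv HSG_tri by blast

lemma bc_vtx: "bc k (vtx j) = (if k = j then 1 else 0)"
  by (cases k; cases j; simp add: bc_def)

lemma cell_cond:
  assumes "z \<in> triangle" "y = psi i z"
  shows "bc i y \<ge> 2/5" "\<And>j. j \<noteq> i \<Longrightarrow> 1 - bc i y \<le> 3 * bc j y" "\<And>j. bc j y \<ge> 0"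
proof -
  have z: "\<forall>k. bc k z \<ge> 0" using assms(1) tri_iff by blast
  have l1: "bc i z \<le> 1" by (rule bc_le1[OF z])
  have "bc i y = bc i z * (3/5) + 2/5" using assms(2) bc_psi[of i i z] by (simp add: field_simps)
  then show "bc i y \<ge> 2/5" using l1 z[rule_format, of i] by simp
  show "1 - bc i y \<le> 3 * bc j y" if "j \<noteq> i" for j
  proof -
    have "bc i y = bc i z * (3/5) + 2/5" using assms(2) bc_psi[of i i z] by (simp add: field_simps)
    moreover have "bc j y = bc j z * (1/5) + 1/5 - bc i z * (1/5)" using assms(2) bc_psi[of j i z] that by (simp add: field_simps)
    ultimately show ?thesis using z[rule_format, of j] by linarith
  qed
  show "bc j y \<ge> 0" for j
    using psi_tri[OF assms(1)] assms(2) tri_iff by blast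
qed

lemma third: "i \<noteq> (j::idx) \<Longrightarrow> \<exists>k. k \<noteq> i \<and> k \<noteq> j \<and> (\<forall>l. l = i \<or> l = j \<or> l = k)"
  by (cases i; cases j; auto intro: idx.exhaust)

lemma bc_sum3: "i \<noteq> j \<Longrightarrow> k \<noteq> i \<Longrightarrow> k \<noteq> j \<Longrightarrow> bc i y + bc j y + bc k y = 1"
  using bc_sum[of y] by (cases i; cases j; cases k; simp; linarith)

lemma cell_inter:
  assumes "z \<in> triangle" "z' \<in> triangle" "psi i z = psi j z'" "i \<noteq> j"
  shows "psi i z = psi i (vtx j)"
proof -
  define y where "y = psi i z"
  have y2: "y = psi j z'" using assms y_def by simp
  obtain k where k: "k \<noteq> i" "k \<noteq> j" "\<forall>l. l = i \<or> l = j \<or> l = k" using third[OF assms(4)] by blast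
  note ci = cell_cond[OF assms(1) y_def] and cj = cell_cond[OF assms(2) y2]
  have s: "bc i y + bc j y + bc k y = 1" using bc_sum3[OF assms(4) k(1,2)] .
  have a1: "bc i y \<ge> 2/5" "bc j y \<ge> 2/5" using ci(1) cj(1) by auto
  have a2: "1 - bc i y \<le> 3 * bc k y" "1 - bc j y \<le> 3 * bc k y" "1 - bc i y \<le> 3 * bc j y"
    using ci(2)[of k] cj(2)[of k] ci(2)[of j] k assms(4) by auto
  have v3: "bc k y = 1/5" using s a1 a2 by linarith
  have v: "bc i y = 2/5" "bc j y = 2/5" "bc k y = 1/5" using s a1 a2 v3 by linarith+
  have w: "bc i (psi i (vtx j)) = 2/5" "bc j (psi i (vtx j)) = 2/5" "bc k (psi i (vtx j)) = 1/5"
    using assms(4) k by (simp_all add: bc_psi bc_vtx)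
  have "\<forall>l. bc l y = bc l (psi i (vtx j))"
    using k(3) v w by metis
  then show ?thesis using bc_eqI y_def by blast
qed

lemma tri_bound: "\<exists>R. \<forall>p\<in>triangle. \<forall>q\<in>triangle. dist p q \<le> R"
proof -
  obtain R where R: "\<forall>y\<in>triangle. dist (vtx I1) y \<le> R"
    using compact_imp_bounded[OF compact_tri] bounded_any_center[of triangle "vtx I1"] by blast
  have "dist p q \<le> 2 * R" if "p \<in> triangle" "q \<in> triangle" for p q
  proof -
    have "dist p (vtx I1) \<le> R" "dist (vtx I1) q \<le> R" using R that by (simp_all add: dist_commute)
    then show ?thesis using dist_triangle[of p q "vtx I1"] by linarith
  qed
  then show ?thesis by blast
qed

lemma Phi_cell: "Phi w \<in> psiw w (Suc l) ` triangle"
proof -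
  define S where "S = (\<lambda>l. psiw w (Suc l) ` triangle)"
  have cl: "closed (S n)" for n
    unfolding S_def by (intro compact_imp_closed compact_continuous_image psiw_cont compact_tri)
  have ne: "S n \<noteq> {}" for n unfolding S_def using vtx_tri by blast
  have sub: "S (Suc n) \<subseteq> S n" for n
  proof -
    have "S (Suc n) = psiw w (Suc n) ` (psi (w (Suc n)) ` triangle)" unfolding S_def by (simp add: image_comp)
    also have "\<dots> \<subseteq> S n" unfolding S_def using psi_tri by (intro image_mono) blast
    finally show ?thesis .
  qed
  have dec: "m \<le> n \<Longrightarrow> S n \<subseteq> S m" for m n
    using decseq_SucI[of S, OF sub] unfolding decseq_def by blast
  obtain R where R: "\<forall>p\<in>triangle. \<forall>q\<in>triangle. dist p q \<le> R" using tri_bound by blast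
  have diam: "\<exists>n. \<forall>x\<in>S n. \<forall>y\<in>S n. dist x y < e" if e0: "e > 0" for e
  proof -
    have "R \<ge> 0" using R vtx_tri by (meson order_trans zero_le_dist)
    then obtain n where n: "(3/5)^n * R < e" using pow_small[of R e] e0 by blast
    have "dist x y < e" if xy: "x \<in> S n" "y \<in> S n" for x y
    proof -
      obtain p q where pq: "p \<in> triangle" "q \<in> triangle" "x = psiw w (Suc n) p" "y = psiw w (Suc n) q"
        using xy unfolding S_def by blast
      have "dist x y \<le> (3/5)^(Suc n) * dist p q" unfolding pq(3,4) by (rule psiw_dist)
      also have "\<dots> \<le> (3/5)^n * R"
      proof -
        have "(3/5::real)^(Suc n) \<le> (3/5)^n" by (simp add: power_decreasing)
        moreover have "dist p q \<le> R" using R pq by blast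
        ultimately show ?thesis by (meson mult_mono zero_le_dist zero_le_power zero_le_divide_iff zero_le_numeral)
      qed
      finally show ?thesis using n by simp
    qed
    then show ?thesis by blast
  qed
  obtain a where a: "\<Inter>(range S) = {a}"
    using decreasing_closed_nest_sing[of S, OF cl ne dec diam] by blast
  have "\<exists>!p. (\<Inter>l. psiw w (Suc l) ` triangle) = {p}" using a unfolding S_def by auto
  then have "(\<Inter>l. psiw w (Suc l) ` triangle) = {Phi w}" unfolding Phi_def by (rule theI')
  then show ?thesis by blast
qed

lemma coding_unique:
  assumes "Phi w = Phi w'" "Phi w \<notin> Nset"
  shows "w = w'"
proof (rule ccontr)
  assume "w \<noteq> w'"
  then have ex: "\<exists>m. w m \<noteq> w' m" by auto
  define m where "m = (LEAST m. w m \<noteq> w' m)"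
  have wm: "w m \<noteq> w' m" unfolding m_def by (rule LeastI_ex[OF ex])
  have below: "\<forall>k<m. w k = w' k" unfolding m_def using not_less_Least by blast
  have eqm: "psiw w' m = psiw w m" using psiw_cong below by metis
  obtain z where z: "z \<in> triangle" "Phi w = psiw w (Suc m) z" using Phi_cell[of w m] by blast
  obtain z' where z': "z' \<in> triangle" "Phi w' = psiw w' (Suc m) z'" using Phi_cell[of w' m] by blast
  have "psiw w m (psi (w m) z) = psiw w m (psi (w' m) z')" using z z' assms(1) eqm by simp
  then have "psi (w m) z = psi (w' m) z'" by (rule psiw_inj)
  then have "psi (w m) z = psi (w m) (vtx (w' m))" using cell_inter z(1) z'(1) wm by blast
  then have "Phi w = psiw w (Suc m) (vtx (w' m))" using z by simp
  then have "Phi w \<in> Nset" unfolding Nset_def by blast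
  then show False using assms(2) by blast
qed

abbreviation "DD (b::real) g \<equiv> max \<bar>b\<bar> (max \<bar>g\<bar> \<bar>b - g\<bar>)"

definition "PR t0 t1 t2 b g \<longleftrightarrow>
  (\<bar>b\<bar> \<ge> DD b g / 15 \<and> \<bar>t1*b + t2*g\<bar> \<ge> DD b g / 15 * (1 - t0) \<and> \<bar>-t0*b + t2*(g - b)\<bar> \<ge> DD b g / 15 * (1 - t1)) \<or>
  (\<bar>g\<bar> \<ge> DD b g / 15 \<and> \<bar>t1*b + t2*g\<bar> \<ge> DD b g / 15 * (1 - t0) \<and> \<bar>-t0*g + t1*(b - g)\<bar> \<ge> DD b g / 15 * (1 - t2)) \<or>
  (\<bar>b - g\<bar> \<ge> DD b g / 15 \<and> \<bar>-t0*b + t2*(g - b)\<bar> \<ge> DD b g / 15 * (1 - t1) \<and> \<bar>-t0*g + t1*(b - g)\<bar> \<ge> DD b g / 15 * (1 - t2))"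

lemma core_pos:
  fixes t0 t1 t2 b g :: real
  assumes s: "t2 = 1 - t0 - t1" and nn: "t0 \<ge> 0" "t1 \<ge> 0" "t2 \<ge> 0" and c0: "t0 \<ge> 2/5"
    and c1: "1 - t0 \<le> 3*t1" and c2: "1 - t0 \<le> 3*t2"
    and b: "b \<ge> 0" and g: "\<bar>g\<bar> \<le> b"
  shows "PR t0 t1 t2 b g"
proof -
  have t0le: "1 - t0 \<ge> 0" using s nn by linarith
  have bg: "b - g \<ge> 0" using g by linarith
  have gl: "-b \<le> g" "g \<le> b" using g by linarith+
  have c1': "3*t1 - (1 - t0) \<ge> 0" using c1 by linarith
  have t2': "1 - t0 - t1 \<ge> 0" using s nn by linarith
  have mg: "-g \<ge> 0 \<Longrightarrow> t0 * (-g) \<ge> 2/5 * (-g)" using mult_right_mono[of "2/5" t0 "-g"] c0 by simp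
  show ?thesis
  proof (cases "g \<ge> 0")
    case True
    have D: "DD b g = b" using True g b by auto
    have i: "\<bar>b\<bar> \<ge> b / 15" using b by simp
    have "t1*b + t2*g \<ge> b / 15 * (1 - t0)"
      using mult_right_mono[OF c1 b] mult_nonneg_nonneg[OF nn(3) True] mult_nonneg_nonneg[OF t0le b] c0 b
      unfolding s by (simp add: field_simps; linarith)
    then have ii: "\<bar>t1*b + t2*g\<bar> \<ge> b / 15 * (1 - t0)" using abs_ge_self[of "t1*b + t2*g"] by linarith
    have "-t0*b + t2*(g - b) \<le> - (b / 15 * (1 - t1))"
      using mult_right_mono[OF c0 b] mult_nonneg_nonneg[OF nn(3) bg] mult_nonneg_nonneg[OF nn(2) b] b
      unfolding s by (simp add: field_simps)
    then have iii: "\<bar>-t0*b + t2*(g - b)\<bar> \<ge> b / 15 * (1 - t1)" using abs_ge_minus_self[of "-t0*b + t2*(g - b)"] by linarith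
    show ?thesis unfolding PR_def D using i ii iii by blast
  next
    case False
    then have D: "DD b g = b - g" using g b by auto
    show ?thesis
    proof (cases "-g \<ge> (b - g)/6")
      case True
      have g6: "-6*g \<ge> b - g" using True by (simp add: field_simps)
      have mg': "t0 * (-g) \<ge> 2/5 * (-g)" using mg False by simp
      have i: "\<bar>b - g\<bar> \<ge> (b - g) / 15" using bg by simp
      have "-t0*b + t2*(g - b) \<le> - ((b - g) / 15 * (1 - t1))"
        using mult_right_mono[OF c0 b] mult_nonneg_nonneg[OF nn(3) bg] mult_nonneg_nonneg[OF nn(2) bg] gl(1) b
        unfolding s by (simp add: field_simps; linarith)
      then have ii: "\<bar>-t0*b + t2*(g - b)\<bar> \<ge> (b - g) / 15 * (1 - t1)" using abs_ge_minus_self[of "-t0*b + t2*(g - b)"] by linarith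
      have "-t0*g + t1*(b - g) \<ge> (b - g) / 15 * (1 - t2)"
        using mg' mult_nonneg_nonneg[OF nn(2) bg] mult_nonneg_nonneg[OF t2' bg] g6
        unfolding s by (simp add: field_simps; linarith)
      then have iii: "\<bar>-t0*g + t1*(b - g)\<bar> \<ge> (b - g) / 15 * (1 - t2)" using abs_ge_self[of "-t0*g + t1*(b - g)"] by linarith
      show ?thesis unfolding PR_def D using i ii iii by blast
    next
      case gsmall: False
      have bg5: "b + 5*g \<ge> 0" using gsmall by (simp add: field_simps)
      have i: "\<bar>b\<bar> \<ge> (b - g) / 15" using b g by simp
      have "t1*b + t2*g \<ge> (b - g) / 15 * (1 - t0)"
        using mult_nonneg_nonneg[OF t0le bg5] mult_nonneg_nonneg[OF c1' bg]
          mult_nonneg_nonneg[OF t0le bg] nn c0 c1 bg5 gl b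
        unfolding s by (simp add: field_simps; linarith)
      then have ii: "\<bar>t1*b + t2*g\<bar> \<ge> (b - g) / 15 * (1 - t0)" using abs_ge_self[of "t1*b + t2*g"] by linarith
      have "-t0*b + t2*(g - b) \<le> - ((b - g) / 15 * (1 - t1))"
        using mult_right_mono[OF c0 b] mult_nonneg_nonneg[OF nn(3) bg] mult_nonneg_nonneg[OF nn(2) bg] nn bg5 gl b
        unfolding s by (simp add: field_simps; linarith)
      then have iii: "\<bar>-t0*b + t2*(g - b)\<bar> \<ge> (b - g) / 15 * (1 - t1)" using abs_ge_minus_self[of "-t0*b + t2*(g - b)"] by linarith
      show ?thesis unfolding PR_def D using i ii iii by blast
    qed
  qed
qed

lemma PR_neg: "PR t0 t1 t2 (-b) (-g) = PR t0 t1 t2 b g"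
proof -
  have e1: "t1*(-b) + t2*(-g) = -(t1*b + t2*g)" by simp
  have e2: "-t0*(-b) + t2*(-g - -b) = -(-t0*b + t2*(g - b))" by (simp add: algebra_simps)
  have e3: "-t0*(-g) + t1*(-(b - g)) = -(-t0*g + t1*(b - g))" by (simp add: algebra_simps)
  have e4: "-b - -g = -(b - g)" by simp
  show ?thesis unfolding PR_def e1 e2 e4 e3 abs_minus_cancel ..
qed

lemma DD_swap: "max \<bar>g\<bar> (max \<bar>b\<bar> \<bar>b - g\<bar>) = DD b g"
  by (simp add: abs_minus_commute max.commute max.left_commute)

lemma PR_swap: "PR t0 t2 t1 g b \<Longrightarrow> PR t0 t1 t2 b g"
proof -
  have e1: "t2*g + t1*b = t1*b + t2*g" by simp
  show "PR t0 t2 t1 g b \<Longrightarrow> PR t0 t1 t2 b g" unfolding PR_def e1 abs_minus_commute[of g b] DD_swap by blast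
qed

lemma core_gen:
  fixes t0 t1 t2 b g :: real
  assumes "\<bar>g\<bar> \<le> \<bar>b\<bar>" "t2 = 1 - t0 - t1" "t0 \<ge> 0" "t1 \<ge> 0" "t2 \<ge> 0" "t0 \<ge> 2/5"
     "1 - t0 \<le> 3*t1" "1 - t0 \<le> 3*t2"
  shows "PR t0 t1 t2 b g"
proof (cases "b \<ge> 0")
  case True
  then show ?thesis using core_pos[of t2 t0 t1 b g] assms by simp
next
  case False
  have "PR t0 t1 t2 (-b) (-g)" using core_pos[of t2 t0 t1 "-b" "-g"] assms False by simp
  then show ?thesis by (simp only: PR_neg)
qed

lemma core_all:
  fixes t0 t1 t2 b g :: real
  assumes s: "t2 = 1 - t0 - t1" and nn: "t0 \<ge> 0" "t1 \<ge> 0" "t2 \<ge> 0" and c0: "t0 \<ge> 2/5"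
    and c1: "1 - t0 \<le> 3*t1" and c2: "1 - t0 \<le> 3*t2"
  shows "PR t0 t1 t2 b g"
proof (cases "\<bar>g\<bar> \<le> \<bar>b\<bar>")
  case True show ?thesis by (rule core_gen[OF True s nn c0 c1 c2])
next
  case False
  have "PR t0 t2 t1 g b" using core_gen[of b g t1 t0 t2] False s nn c0 c1 c2 by simp
  then show ?thesis by (rule PR_swap)
qed

definition GG :: "(idx \<Rightarrow> real) \<Rightarrow> (idx \<Rightarrow> real) \<Rightarrow> idx \<Rightarrow> real" where
  "GG t \<alpha> P = t I1 * (\<alpha> I1 - \<alpha> P) + t I2 * (\<alpha> I2 - \<alpha> P) + t I3 * (\<alpha> I3 - \<alpha> P)"

definition Dl :: "(idx \<Rightarrow> real) \<Rightarrow> real" where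
  "Dl \<alpha> = DD (\<alpha> I2 - \<alpha> I1) (\<alpha> I3 - \<alpha> I1)"

definition good :: "(idx \<Rightarrow> real) \<Rightarrow> (idx \<Rightarrow> real) \<Rightarrow> idx \<Rightarrow> idx \<Rightarrow> bool" where
  "good t \<alpha> P Q \<longleftrightarrow> P \<noteq> Q \<and> \<bar>\<alpha> Q - \<alpha> P\<bar> \<ge> Dl \<alpha> / 15 \<and>
     \<bar>GG t \<alpha> P\<bar> \<ge> Dl \<alpha> / 15 * (1 - t P) \<and> \<bar>GG t \<alpha> Q\<bar> \<ge> Dl \<alpha> / 15 * (1 - t Q)"

lemma from_PR:
  assumes PR: "PR (t P0) (t R1) (t R2) (\<alpha> R1 - \<alpha> P0) (\<alpha> R2 - \<alpha> P0)"
    and d: "P0 \<noteq> R1" "P0 \<noteq> R2" "R1 \<noteq> R2"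
    and D: "DD (\<alpha> R1 - \<alpha> P0) (\<alpha> R2 - \<alpha> P0) = Dl \<alpha>"
    and G0: "GG t \<alpha> P0 = t R1 * (\<alpha> R1 - \<alpha> P0) + t R2 * (\<alpha> R2 - \<alpha> P0)"
    and G1: "GG t \<alpha> R1 = - t P0 * (\<alpha> R1 - \<alpha> P0) + t R2 * ((\<alpha> R2 - \<alpha> P0) - (\<alpha> R1 - \<alpha> P0))"
    and G2: "GG t \<alpha> R2 = - t P0 * (\<alpha> R2 - \<alpha> P0) + t R1 * ((\<alpha> R1 - \<alpha> P0) - (\<alpha> R2 - \<alpha> P0))"
  shows "\<exists>P Q. good t \<alpha> P Q"
proof -
  have e: "\<bar>(\<alpha> R1 - \<alpha> P0) - (\<alpha> R2 - \<alpha> P0)\<bar> = \<bar>\<alpha> R2 - \<alpha> R1\<bar>" by (simp add: abs_minus_commute)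
  from PR[unfolded PR_def D] have "good t \<alpha> P0 R1 \<or> good t \<alpha> P0 R2 \<or> good t \<alpha> R1 R2"
    unfolding G0[symmetric] G1[symmetric] G2[symmetric] e good_def using d by simp
  then show ?thesis by blast
qed

lemma Dl_I2: "DD (\<alpha> I1 - \<alpha> I2) (\<alpha> I3 - \<alpha> I2) = Dl \<alpha>"
  unfolding Dl_def by (smt (verit))

lemma Dl_I3: "DD (\<alpha> I1 - \<alpha> I3) (\<alpha> I2 - \<alpha> I3) = Dl \<alpha>"
  unfolding Dl_def by (smt (verit))

lemma pair_exists:
  assumes s: "t I1 + t I2 + t I3 = 1" and nn: "\<forall>i. t i \<ge> 0" and c0: "t P0 \<ge> 2/5"
    and c: "\<forall>j. j \<noteq> P0 \<longrightarrow> 1 - t P0 \<le> 3 * t j"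
  shows "\<exists>P Q. good t \<alpha> P Q"
proof (cases P0)
  case I1
  have "PR (t I1) (t I2) (t I3) (\<alpha> I2 - \<alpha> I1) (\<alpha> I3 - \<alpha> I1)"
    using core_all[of "t I3" "t I1" "t I2"] s nn c0 c I1 by simp
  then show ?thesis by (rule from_PR) (simp_all add: Dl_def GG_def algebra_simps)
next
  case I2
  have "PR (t I2) (t I1) (t I3) (\<alpha> I1 - \<alpha> I2) (\<alpha> I3 - \<alpha> I2)"
    using core_all[of "t I3" "t I2" "t I1"] s nn c0 c I2 by simp
  then show ?thesis by (rule from_PR[OF _ _ _ _ Dl_I2]) (simp_all add: GG_def algebra_simps)
next
  case I3
  have "PR (t I3) (t I1) (t I2) (\<alpha> I1 - \<alpha> I3) (\<alpha> I2 - \<alpha> I3)"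
    using core_all[of "t I2" "t I3" "t I1"] s nn c0 c I3 by simp
  then show ?thesis by (rule from_PR[OF _ _ _ _ Dl_I3]) (simp_all add: GG_def algebra_simps)
qed

lemma inner2: "(x::real^2) \<bullet> y = x$1 * y$1 + x$2 * y$2"
  by (simp add: inner_vec_def sum_2)

lemma hs_sq_eq: "hs_sq D = (D$1$1)^2 + (D$1$2)^2 + (D$2$1)^2 + (D$2$2)^2"
  by (simp add: hs_sq_def trace_def matrix_matrix_mult_def transpose_def sum_2 power2_eq_square)

lemma mv_inner: "((D::real^2^2) *v d) \<bullet> V = (transpose D *v V) \<bullet> d"
  by (simp add: inner2 mv2 transpose_def algebra_simps)

lemma normP: "norm V = 1 \<Longrightarrow> norm (projP V y) = \<bar>y \<bullet> V\<bar>"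
  by (simp add: projP_def)

lemma perp_sq: "norm V = 1 \<Longrightarrow> (norm (projPerp V y))^2 = (norm y)^2 - (y \<bullet> V)^2"
proof -
  assume V: "norm V = 1"
  have "(norm (projPerp V y))^2 = (y - (y \<bullet> V) *\<^sub>R V) \<bullet> (y - (y \<bullet> V) *\<^sub>R V)"
    by (simp add: projPerp_def projP_def power2_norm_eq_inner)
  also have "\<dots> = y \<bullet> y - 2 * (y \<bullet> V)^2 + (y \<bullet> V)^2 * (V \<bullet> V)"
    by (simp add: inner_diff_left inner_diff_right inner_commute power2_eq_square algebra_simps)
  also have "V \<bullet> V = 1" using V by (simp add: dot_square_norm)
  finally show ?thesis by (simp add: power2_norm_eq_inner)
qed

lemma perp_bound:
  fixes D :: "real^2^2"
  assumes V: "norm V = 1"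
  shows "norm (projPerp V (D *v d)) \<le> norm d * sqrt (hs_sq D - (norm (transpose D *v V))^2)"
proof -
  define y where "y = D *v d"
  have V1: "V$1^2 + V$2^2 = 1" using V normsq2[of V] by simp
  define r1 where "r1 = D$1$1 * V$2 - D$2$1 * V$1"
  define r2 where "r2 = D$1$2 * V$2 - D$2$2 * V$1"
  have py: "(norm (projPerp V y))^2 = (r1 * d$1 + r2 * d$2)^2"
  proof -
    have "(norm (projPerp V y))^2 = (y$1^2 + y$2^2) * (V$1^2 + V$2^2) - (y$1 * V$1 + y$2 * V$2)^2"
      using perp_sq[OF V, of y] V1 by (simp add: normsq2 inner2)
    also have "\<dots> = (y$1 * V$2 - y$2 * V$1)^2" by (simp add: power2_eq_square algebra_simps)
    also have "y$1 * V$2 - y$2 * V$1 = r1 * d$1 + r2 * d$2"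
      by (simp add: y_def r1_def r2_def mv2 algebra_simps)
    finally show ?thesis .
  qed
  have cs: "(r1 * d$1 + r2 * d$2)^2 \<le> (r1^2 + r2^2) * (norm d)^2"
  proof -
    have "(r1^2 + r2^2) * (d$1^2 + d$2^2) - (r1 * d$1 + r2 * d$2)^2 = (r1 * d$2 - r2 * d$1)^2"
      by (simp add: power2_eq_square algebra_simps)
    then show ?thesis by (simp add: normsq2) (smt (verit) zero_le_power2)
  qed
  have rr: "r1^2 + r2^2 = hs_sq D - (norm (transpose D *v V))^2"
  proof -
    have "(norm (transpose D *v V))^2 = (D$1$1 * V$1 + D$2$1 * V$2)^2 + (D$1$2 * V$1 + D$2$2 * V$2)^2"
      by (simp add: normsq2 mv2 transpose_def)
    moreover have "hs_sq D = ((D$1$1)^2 + (D$1$2)^2 + (D$2$1)^2 + (D$2$2)^2) * (V$1^2 + V$2^2)"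
      using V1 by (simp add: hs_sq_eq)
    ultimately show ?thesis by (simp add: r1_def r2_def power2_eq_square algebra_simps)
  qed
  have nn: "hs_sq D - (norm (transpose D *v V))^2 \<ge> 0" using rr[symmetric] by simp
  have "(norm (projPerp V y))^2 \<le> (norm d * sqrt (hs_sq D - (norm (transpose D *v V))^2))^2"
  proof -
    show ?thesis using py cs rr nn by (simp add: power_mult_distrib mult.commute)
  qed
  then show ?thesis unfolding y_def
    by (rule power2_le_imp_le) (use nn in simp)
qed

lemma q_le:
  fixes D :: "real^2^2"
  assumes V: "norm V = 1"
  shows "(norm (transpose D *v V))^2 \<le> hs_sq D"
proof -
  have V1: "V$1^2 + V$2^2 = 1" using V normsq2[of V] by simp
  have "(norm (transpose D *v V))^2 = (D$1$1 * V$1 + D$2$1 * V$2)^2 + (D$1$2 * V$1 + D$2$2 * V$2)^2"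
    by (simp add: normsq2 mv2 transpose_def)
  moreover have "hs_sq D = ((D$1$1)^2 + (D$1$2)^2 + (D$2$1)^2 + (D$2$2)^2) * (V$1^2 + V$2^2)"
    using V1 by (simp add: hs_sq_eq)
  ultimately have "hs_sq D - (norm (transpose D *v V))^2 = (D$1$1 * V$2 - D$2$1 * V$1)^2 + (D$1$2 * V$2 - D$2$2 * V$1)^2"
    by (simp add: power2_eq_square algebra_simps)
  then show ?thesis by (smt (verit) zero_le_power2)
qed

lemma inv_s3: "1 / sqrt 3 \<le> (1::real)" "sqrt 3 \<le> (2::real)"
proof -
  have "1 \<le> sqrt (3::real)" by simp
  then show "1 / sqrt 3 \<le> (1::real)" by simp
  show "sqrt 3 \<le> (2::real)" by (rule real_le_lsqrt) auto
qed

lemma vtx_dist: "norm (vtx i - vtx j) \<le> 3"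
proof -
  have "norm (vtx i - vtx j) \<le> \<bar>(vtx i - vtx j)$1\<bar> + \<bar>(vtx i - vtx j)$2\<bar>"
    using norm_le_l1_cart[of "vtx i - vtx j"] by (simp add: sum_2)
  also have "\<dots> \<le> 3"
  proof -
    have "2 / sqrt 3 = 2 * (1 / sqrt (3::real))" by simp
    then have "2 / sqrt 3 \<le> (2::real)" using inv_s3(1) by linarith
    then show ?thesis using inv_s3 by (cases i; cases j; simp; linarith)
  qed
  finally show ?thesis .
qed

lemma GG_inner: "a \<bullet> (y - vtx P) = GG (\<lambda>i. bc i y) (\<lambda>i. a \<bullet> vtx i) P"
proof -
  have "a \<bullet> y = bc I1 y * (a \<bullet> vtx I1) + bc I2 y * (a \<bullet> vtx I2) + bc I3 y * (a \<bullet> vtx I3)"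
    by (subst bc_recon) (simp add: inner_add_right)
  moreover have "a \<bullet> vtx P = (bc I1 y + bc I2 y + bc I3 y) * (a \<bullet> vtx P)" using bc_sum[of y] by simp
  ultimately show ?thesis by (simp add: GG_def inner_diff_right algebra_simps)
qed

lemma dist_bc: "y \<in> triangle \<Longrightarrow> norm (y - vtx P) \<le> 3 * (1 - bc P y)"
proof -
  assume "y \<in> triangle"
  then have nn: "\<forall>i. bc i y \<ge> 0" using tri_iff by blast
  define t where "t = (\<lambda>i. bc i y)"
  have "y - vtx P = t I1 *\<^sub>R (vtx I1 - vtx P) + t I2 *\<^sub>R (vtx I2 - vtx P) + t I3 *\<^sub>R (vtx I3 - vtx P)"
  proof -
    have "vtx P = (t I1 + t I2 + t I3) *\<^sub>R vtx P" using bc_sum[of y] by (simp add: t_def)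
    then show ?thesis unfolding t_def by (subst (1) bc_recon) (simp add: algebra_simps scaleR_diff_right scaleR_add_left)
  qed
  also have "norm \<dots> \<le> t I1 * norm (vtx I1 - vtx P) + t I2 * norm (vtx I2 - vtx P) + t I3 * norm (vtx I3 - vtx P)"
    using nn unfolding t_def
    by (smt (verit, best) norm_scaleR norm_triangle_ineq abs_of_nonneg)
  also have "\<dots> \<le> 3 * (1 - t P)"
  proof -
    have b: "t i * norm (vtx i - vtx P) \<le> t i * 3" for i
      using nn vtx_dist[of i P] unfolding t_def by (simp add: mult_left_mono)
    have z: "t P * norm (vtx P - vtx P) = 0" by simp
    show ?thesis using b[of I1] b[of I2] b[of I3] z bc_sum[of y] unfolding t_def
      by (cases P; simp; linarith)
  qed
  finally show ?thesis by (simp add: t_def)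
qed

lemma Dl_ge: "norm a \<le> 2 * Dl (\<lambda>i. a \<bullet> vtx i)"
proof -
  define u where "u = a$2 / sqrt 3"
  have a2: "a$2 = sqrt 3 * u" by (simp add: u_def)
  have "\<bar>a$2\<bar> \<le> 2 * \<bar>u\<bar>" unfolding a2 abs_mult using inv_s3(2)
    by (simp add: mult_right_mono)
  moreover have "norm a \<le> \<bar>a$1\<bar> + \<bar>a$2\<bar>" using norm_le_l1_cart[of a] by (simp add: sum_2)
  moreover have "Dl (\<lambda>i. a \<bullet> vtx i) = max \<bar>a$1 + u\<bar> (max \<bar>a$1 - u\<bar> \<bar>(a$1 + u) - (a$1 - u)\<bar>)"
    by (simp add: Dl_def inner2 u_def divide_inverse)
  ultimately have n: "norm a \<le> \<bar>a$1\<bar> + 2 * \<bar>u\<bar>" and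
    Dle: "\<bar>a$1 + u\<bar> \<le> Dl (\<lambda>i. a \<bullet> vtx i)" "\<bar>a$1 - u\<bar> \<le> Dl (\<lambda>i. a \<bullet> vtx i)"
       "2 * \<bar>u\<bar> \<le> Dl (\<lambda>i. a \<bullet> vtx i)"
    by (auto simp: le_max_iff_disj abs_mult)
  have "2 * \<bar>a$1\<bar> \<le> \<bar>a$1 + u\<bar> + \<bar>a$1 - u\<bar>" using abs_triangle_ineq[of "a$1 + u" "a$1 - u"] by simp
  then show ?thesis using n Dle by linarith
qed

lemma bc_one: "y \<in> triangle \<Longrightarrow> bc P y = 1 \<Longrightarrow> y = vtx P"
proof -
  assume y: "y \<in> triangle" "bc P y = 1"
  have nn: "\<forall>i. bc i y \<ge> 0" using y(1) tri_iff by blast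
  have "bc i y = bc i (vtx P)" for i
    using nn[rule_format, of I1] nn[rule_format, of I2] nn[rule_format, of I3] bc_sum[of y] y(2)
    by (cases i; cases P; simp add: bc_vtx; linarith)
  then show ?thesis by (intro bc_eqI) blast
qed

lemma perm_of_pair: "P \<noteq> Q \<Longrightarrow> \<exists>\<sigma>. \<sigma> permutes (UNIV::idx set) \<and> \<sigma> I1 = P \<and> \<sigma> I2 = Q"
proof -
  assume pq: "P \<noteq> Q"
  define R where "R = (if I1 \<noteq> P \<and> I1 \<noteq> Q then I1 else if I2 \<noteq> P \<and> I2 \<noteq> Q then I2 else I3)"
  define \<sigma> where "\<sigma> = (\<lambda>i. if i = I1 then P else if i = I2 then Q else R)"
  have R: "R \<noteq> P" "R \<noteq> Q" using pq unfolding R_def by (cases P; cases Q; simp)+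
  have "inj \<sigma>" unfolding inj_def \<sigma>_def using pq R
    by (auto split: if_splits) (metis idx.exhaust)+
  moreover have "surj \<sigma>"
  proof -
    have "\<forall>y. y = P \<or> y = Q \<or> y = R" using pq R by (metis idx.exhaust)
    then show ?thesis unfolding \<sigma>_def surj_def by (metis idx.distinct)
  qed
  ultimately have "bij \<sigma>" by (simp add: bij_def)
  then have "\<sigma> permutes UNIV" by (intro bij_imp_permutes) (simp_all add: bij_def)
  then show ?thesis unfolding \<sigma>_def by auto
qed

lemma Dw_lower: "(1/5)^n * norm z \<le> norm (Dw w n *v z)"
proof (induction n arbitrary: z)
  case 0 then show ?case by simp
next
  case (Suc n)
  have "(1/5::real)^(Suc n) * norm z = (1/5)^n * (1/5 * norm z)" by simp
  also have "\<dots> \<le> (1/5)^n * norm (T (w n) *v z)"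
    by (rule mult_left_mono[OF T_ge]) simp
  also have "\<dots> \<le> norm (Dw w n *v (T (w n) *v z))" by (rule Suc.IH)
  also have "\<dots> = norm (Dw w (Suc n) *v z)" by (simp add: matrix_vector_mul_assoc)
  finally show ?case .
qed

lemma hs_pos: "hs_sq (Dw w n) > 0"
proof (rule ccontr)
  define D where "D = Dw w n"
  assume "\<not> hs_sq (Dw w n) > 0"
  then have z: "(D$1$1)^2 + (D$1$2)^2 + (D$2$1)^2 + (D$2$2)^2 \<le> 0" using hs_sq_eq[of D] unfolding D_def by simp
  have "(D$1$1)^2 = 0" "(D$2$1)^2 = 0"
    using z zero_le_power2[of "D$1$1"] zero_le_power2[of "D$1$2"] zero_le_power2[of "D$2$1"] zero_le_power2[of "D$2$2"]
    by linarith+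
  then have d0: "D$1$1 = 0" "D$2$1 = 0" by simp_all
  define e :: "real^2" where "e = vector [1, 0]"
  have "D *v e = 0" using d0 by (simp add: vec2_eq mv2 e_def)
  moreover have "(norm e)^2 = 1" by (simp add: normsq2 e_def)
  then have "norm e = 1" using norm_ge_zero[of e] by (auto simp: power2_eq_1_iff)
  ultimately have "(1/5::real)^n \<le> 0" using Dw_lower[of n e w] unfolding D_def by simp
  moreover have "(1/5::real)^n > 0" by simp
  ultimately show False by linarith
qed

lemma qsq: "(norm (transpose (D::real^2^2) *v V))^2 = V \<bullet> ((D ** transpose D) *v V)"
proof -
  have "(norm (transpose D *v V))^2 = (transpose D *v V) \<bullet> (transpose D *v V)" by (simp add: power2_norm_eq_inner)
  also have "\<dots> = (D *v (transpose D *v V)) \<bullet> V" by (rule mv_inner[symmetric])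
  finally have a: "(norm (transpose D *v V))^2 = (D *v (transpose D *v V)) \<bullet> V" .
  show ?thesis unfolding a matrix_vector_mul_assoc by (rule inner_commute)
qed

lemma quad_form: "(V::real^2) \<bullet> ((M::real^2^2) *v V) = V$1 * (M$1$1 * V$1 + M$1$2 * V$2) + V$2 * (M$2$1 * V$1 + M$2$2 * V$2)"
  by (simp add: inner2 mv2)

lemma rho_lim:
  fixes D :: "nat \<Rightarrow> real^2^2"
  assumes L: "(\<lambda>l. (1 / hs_sq (D l)) *\<^sub>R (D l ** transpose (D l))) \<longlonglongrightarrow> projmat V"
    and V: "norm V = 1"
  shows "(\<lambda>l. (norm (transpose (D l) *v V))^2 / hs_sq (D l)) \<longlonglongrightarrow> 1"
proof -
  define M where "M = (\<lambda>l. (1 / hs_sq (D l)) *\<^sub>R (D l ** transpose (D l)))"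
  have e: "(norm (transpose (D l) *v V))^2 / hs_sq (D l) = V \<bullet> (M l *v V)" for l
    unfolding M_def qsq by (simp add: scaleR_matrix_vector_assoc[symmetric] divide_inverse mult.commute)
  have c: "(\<lambda>l. M l $ i $ j) \<longlonglongrightarrow> projmat V $ i $ j" for i j
    using L unfolding M_def by (intro tendsto_vec_nth)
  have "(\<lambda>l. V \<bullet> (M l *v V)) \<longlonglongrightarrow> V \<bullet> (projmat V *v V)"
    unfolding quad_form by (intro tendsto_intros c)
  moreover have "V \<bullet> (projmat V *v V) = 1"
  proof -
    have V1: "V$1^2 + V$2^2 = 1" using V normsq2[of V] by simp
    have "V \<bullet> (projmat V *v V) = (V$1^2 + V$2^2)^2"
      unfolding quad_form by (simp add: projmat_def power2_eq_square algebra_simps)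
    then show ?thesis using V1 by simp
  qed
  ultimately show ?thesis unfolding e by simp
qed

lemma sqrt_split:
  assumes "h > 0" "r > 0" "r \<le> h"
  shows "sqrt (h - r) = sqrt r * sqrt (1 / (r / h) - 1)"
proof -
  have "h - r = r * (1 / (r / h) - 1)" using assms by (simp add: field_simps)
  then show ?thesis by (simp add: real_sqrt_mult)
qed

lemma perp_edge:
  fixes D :: "real^2^2"
  assumes V: "norm V = 1" and hE: "sqrt (hs_sq D - (norm (transpose D *v V))^2) = norm (transpose D *v V) * E"
    and E: "E \<ge> 0"
  shows "norm (projPerp V (D *v d)) \<le> norm d * (norm (transpose D *v V) * E)"
  using perp_bound[OF V, of D d] hE by simp

lemma edge_bound:
  fixes D :: "real^2^2" and V :: "real^2"
  defines "q \<equiv> transpose D *v V"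
  assumes V: "norm V = 1" and qpos: "norm q > 0"
    and hE: "sqrt (hs_sq D - (norm q)^2) = norm q * E" and E: "E \<ge> 0"
    and sp: "\<bar>q \<bullet> vtx Q - q \<bullet> vtx P\<bar> \<ge> Dl (\<lambda>i. q \<bullet> vtx i) / 15"
  shows "norm (projP V (D *v (vtx P - vtx Q))) \<noteq> 0"
    "max (norm (projPerp V (D *v (vtx P - vtx Q))))
        (max (norm (projPerp V (D *v (vtx Q - vtx R)))) (norm (projPerp V (D *v (vtx R - vtx P)))))
      / norm (projP V (D *v (vtx P - vtx Q))) \<le> 90 * E"
proof -
  have den: "norm (projP V (D *v (vtx P - vtx Q))) = \<bar>q \<bullet> vtx Q - q \<bullet> vtx P\<bar>"
    using normP[OF V] mv_inner unfolding q_def by (simp add: inner_diff_right abs_minus_commute)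
  have dl: "norm q \<le> 2 * Dl (\<lambda>i. q \<bullet> vtx i)" by (rule Dl_ge)
  have dge: "norm (projP V (D *v (vtx P - vtx Q))) \<ge> norm q / 30" using den sp dl by linarith
  then show "norm (projP V (D *v (vtx P - vtx Q))) \<noteq> 0" using qpos by linarith
  have pe: "norm (projPerp V (D *v (vtx i - vtx j))) \<le> 3 * (norm q * E)" for i j
  proof -
    have "norm (projPerp V (D *v (vtx i - vtx j))) \<le> norm (vtx i - vtx j) * (norm q * E)"
      using perp_edge[OF V, of D E] hE E unfolding q_def by simp
    also have "\<dots> \<le> 3 * (norm q * E)" using vtx_dist[of i j] qpos E by (simp add: mult_right_mono)
    finally show ?thesis .
  qed
  have num: "max (norm (projPerp V (D *v (vtx P - vtx Q))))
        (max (norm (projPerp V (D *v (vtx Q - vtx R)))) (norm (projPerp V (D *v (vtx R - vtx P))))) \<le> 3 * (norm q * E)"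
    using pe by simp
  have "max (norm (projPerp V (D *v (vtx P - vtx Q))))
        (max (norm (projPerp V (D *v (vtx Q - vtx R)))) (norm (projPerp V (D *v (vtx R - vtx P)))))
      / norm (projP V (D *v (vtx P - vtx Q))) \<le> (3 * (norm q * E)) / (norm q / 30)"
    by (rule frac_le) (use num dge qpos E in auto)
  also have "\<dots> = 90 * E" using qpos by (simp add: field_simps)
  finally show "max (norm (projPerp V (D *v (vtx P - vtx Q))))
        (max (norm (projPerp V (D *v (vtx Q - vtx R)))) (norm (projPerp V (D *v (vtx R - vtx P)))))
      / norm (projP V (D *v (vtx P - vtx Q))) \<le> 90 * E" .
qed

lemma vert_bound:
  fixes D :: "real^2^2" and V :: "real^2"
  defines "q \<equiv> transpose D *v V"
  assumes V: "norm V = 1" and qpos: "norm q > 0"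
    and hE: "sqrt (hs_sq D - (norm q)^2) = norm q * E" and E: "E \<ge> 0"
    and y: "y \<in> triangle" and tP: "bc P y < 1"
    and g: "\<bar>GG (\<lambda>i. bc i y) (\<lambda>i. q \<bullet> vtx i) P\<bar> \<ge> Dl (\<lambda>i. q \<bullet> vtx i) / 15 * (1 - bc P y)"
  shows "norm (projP V (D *v (y - vtx P))) \<noteq> 0"
    "norm (projPerp V (D *v (y - vtx P))) / norm (projP V (D *v (y - vtx P))) \<le> 90 * E"
proof -
  have den: "norm (projP V (D *v (y - vtx P))) = \<bar>GG (\<lambda>i. bc i y) (\<lambda>i. q \<bullet> vtx i) P\<bar>"
    using normP[OF V] mv_inner GG_inner unfolding q_def by simp
  have dl: "norm q \<le> 2 * Dl (\<lambda>i. q \<bullet> vtx i)" by (rule Dl_ge)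
  have u: "1 - bc P y > 0" using tP by simp
  have "Dl (\<lambda>i. q \<bullet> vtx i) / 15 * (1 - bc P y) \<ge> norm q / 30 * (1 - bc P y)"
    using dl u by (intro mult_right_mono) auto
  then have dge: "norm (projP V (D *v (y - vtx P))) \<ge> norm q / 30 * (1 - bc P y)" using den g by linarith
  have dpos: "norm q / 30 * (1 - bc P y) > 0" using qpos u by simp
  then show "norm (projP V (D *v (y - vtx P))) \<noteq> 0" using dge by linarith
  have "norm (projPerp V (D *v (y - vtx P))) \<le> norm (y - vtx P) * (norm q * E)"
    using perp_edge[OF V, of D E] hE E unfolding q_def by simp
  also have "\<dots> \<le> 3 * (1 - bc P y) * (norm q * E)" using dist_bc[OF y, of P] qpos E by (simp add: mult_right_mono)
  finally have num: "norm (projPerp V (D *v (y - vtx P))) \<le> 3 * (1 - bc P y) * (norm q * E)" .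
  have "norm (projPerp V (D *v (y - vtx P))) / norm (projP V (D *v (y - vtx P))) \<le> (3 * (1 - bc P y) * (norm q * E)) / (norm q / 30 * (1 - bc P y))"
    by (rule frac_le) (use num dge dpos qpos E u in auto)
  also have "\<dots> = 90 * E" using qpos u by (simp add: field_simps)
  finally show "norm (projPerp V (D *v (y - vtx P))) / norm (projP V (D *v (y - vtx P))) \<le> 90 * E" .
qed

theorem lemma3p1:
  fixes \<kappa> :: "(real^2) measure" and v :: "real^2 \<Rightarrow> real^2"
    and \<theta>0 :: real and w :: "nat \<Rightarrow> idx" and x :: "real^2"
  assumes kus: "kusuoka_pair \<kappa> v"
    and th0: "\<theta>0 > 0" "\<forall>\<theta>\<in>{0<..\<theta>0}. S_theta \<theta> \<noteq> {}"
    and xw: "x = Phi w" and xS: "x \<in> Shat v"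
  shows "\<exists>\<sigma> :: nat \<Rightarrow> idx \<Rightarrow> idx. (\<forall>n. \<sigma> n permutes UNIV) \<and>
    (let An = (\<lambda>n. psiw w (Suc n) (vtx (\<sigma> n I1)));
         Bn = (\<lambda>n. psiw w (Suc n) (vtx (\<sigma> n I2)));
         Cn = (\<lambda>n. psiw w (Suc n) (vtx (\<sigma> n I3)))
     in
      (eventually (\<lambda>n. norm (projP (v x) (An n - Bn n)) \<noteq> 0) sequentially \<and>
       (\<lambda>n. max (norm (projPerp (v x) (An n - Bn n)))
                 (max (norm (projPerp (v x) (Bn n - Cn n))) (norm (projPerp (v x) (Cn n - An n))))
            / norm (projP (v x) (An n - Bn n))) \<longlonglongrightarrow> 0) \<and>
      (\<forall>\<theta> (nk :: nat \<Rightarrow> nat). \<theta> \<in> {0<..\<theta>0} \<and> strict_mono nk \<and>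
          (\<forall>k. x \<in> psiw w (Suc (nk k)) ` S_theta \<theta>) \<longrightarrow>
        eventually (\<lambda>k. norm (projP (v x) (x - An (nk k))) \<noteq> 0 \<and>
                        norm (projP (v x) (x - Bn (nk k))) \<noteq> 0) sequentially \<and>
        (\<lambda>k. max (norm (projPerp (v x) (x - An (nk k))) / norm (projP (v x) (x - An (nk k))))
                  (norm (projPerp (v x) (x - Bn (nk k))) / norm (projP (v x) (x - Bn (nk k)))))
          \<longlonglongrightarrow> 0))"
proof -
  from xS have xSt: "x \<in> Stilde v" and xN: "x \<notin> Nset" by (simp_all add: Shat_def)
  from xSt obtain w' where xH: "x \<in> HSG" and xw': "x = Phi w'"
    and Lw': "(\<lambda>l. (1 / hs_sq (Dw w' l)) *\<^sub>R (Dw w' l ** transpose (Dw w' l))) \<longlonglongrightarrow> projmat (v x)"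
    unfolding Stilde_def by blast
  have "w = w'" using coding_unique[of w w'] xw xw' xN by simp
  then have L: "(\<lambda>l. (1 / hs_sq (Dw w l)) *\<^sub>R (Dw w l ** transpose (Dw w l))) \<longlonglongrightarrow> projmat (v x)"
    using Lw' by simp
  define V where "V = v x"
  have V: "norm V = 1" using kus xH unfolding kusuoka_pair_def V_def by blast
  define D where "D = (\<lambda>n. Dw w (Suc n))"
  define q where "q = (\<lambda>n. transpose (D n) *v V)"
  define h where "h = (\<lambda>n. hs_sq (D n))"
  define \<rho> where "\<rho> = (\<lambda>n. (norm (q n))^2 / h n)"
  define E where "E = (\<lambda>n. sqrt (1 / \<rho> n - 1))"
  define \<alpha> where "\<alpha> = (\<lambda>n i. q n \<bullet> vtx i)"
  have hpos: "h n > 0" for n unfolding h_def D_def by (rule hs_pos)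
  have \<rho>lim: "\<rho> \<longlonglongrightarrow> 1"
  proof -
    have "(\<lambda>l. (norm (transpose (Dw w l) *v V))^2 / hs_sq (Dw w l)) \<longlonglongrightarrow> 1"
      using rho_lim[OF L[folded V_def] V] .
    then have "(\<lambda>l. (norm (transpose (Dw w (Suc l)) *v V))^2 / hs_sq (Dw w (Suc l))) \<longlonglongrightarrow> 1"
      by (rule LIMSEQ_Suc)
    then show ?thesis unfolding \<rho>_def q_def h_def D_def .
  qed
  have ev: "eventually (\<lambda>n. \<rho> n > 1/2) sequentially"
    using \<rho>lim by (rule order_tendstoD(1)) simp
  have Elim: "E \<longlonglongrightarrow> 0"
  proof -
    have "(\<lambda>n. sqrt (1 / \<rho> n - 1)) \<longlonglongrightarrow> sqrt (1 / 1 - 1)"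
      by (intro tendsto_intros \<rho>lim) simp
    then show ?thesis unfolding E_def by simp
  qed
  have E0: "E n \<ge> 0" if "\<rho> n > 1/2" for n
  proof -
    have "(norm (q n))^2 \<le> h n" unfolding q_def h_def by (rule q_le[OF V])
    then have "\<rho> n \<le> 1" unfolding \<rho>_def using hpos[of n] by (simp add: divide_le_eq)
    then have "1 / \<rho> n \<ge> 1" using that by simp
    then show ?thesis unfolding E_def by simp
  qed
  have qpos: "norm (q n) > 0" if "\<rho> n > 1/2" for n
  proof (rule ccontr)
    assume "\<not> norm (q n) > 0"
    then have "\<rho> n = 0" unfolding \<rho>_def by simp
    then show False using that by simp
  qed
  have hE: "sqrt (hs_sq (D n) - (norm (q n))^2) = norm (q n) * E n" if "\<rho> n > 1/2" for n
  proof -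
    have "sqrt (h n - (norm (q n))^2) = sqrt ((norm (q n))^2) * sqrt (1 / ((norm (q n))^2 / h n) - 1)"
      by (rule sqrt_split) (use hpos qpos[OF that] q_le[OF V, of "D n"] in \<open>auto simp: q_def h_def\<close>)
    then show ?thesis unfolding E_def \<rho>_def h_def by simp
  qed
  define ok where "ok = (\<lambda>n (\<sigma>::idx \<Rightarrow> idx). \<sigma> permutes UNIV \<and> \<bar>\<alpha> n (\<sigma> I2) - \<alpha> n (\<sigma> I1)\<bar> \<ge> Dl (\<alpha> n) / 15 \<and>
     (\<forall>y\<in>HSG. x = psiw w (Suc n) y \<longrightarrow> good (\<lambda>i. bc i y) (\<alpha> n) (\<sigma> I1) (\<sigma> I2)))"
  have exok: "\<exists>\<sigma>. ok n \<sigma>" for n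
  proof (cases "\<exists>y\<in>HSG. x = psiw w (Suc n) y")
    case True
    then obtain y where y: "y \<in> HSG" "x = psiw w (Suc n) y" by blast
    obtain i z where iz: "z \<in> triangle" "y = psi i z" using HSG_cell[OF y(1)] by blast
    note cc = cell_cond[OF iz]
    have "\<exists>P Q. good (\<lambda>i. bc i y) (\<alpha> n) P Q"
      by (rule pair_exists[of _ i]) (use bc_sum cc in auto)
    then obtain P Q where g: "good (\<lambda>i. bc i y) (\<alpha> n) P Q" by blast
    then have "P \<noteq> Q" unfolding good_def by simp
    then obtain \<sigma> where \<sigma>: "\<sigma> permutes UNIV" "\<sigma> I1 = P" "\<sigma> I2 = Q" using perm_of_pair by blast
    have "ok n \<sigma>" unfolding ok_def
    proof (intro conjI ballI impI)
      show "\<sigma> permutes UNIV" by (rule \<sigma>(1))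
      show "\<bar>\<alpha> n (\<sigma> I2) - \<alpha> n (\<sigma> I1)\<bar> \<ge> Dl (\<alpha> n) / 15" using g \<sigma> unfolding good_def by simp
      fix y' assume "y' \<in> HSG" "x = psiw w (Suc n) y'"
      then have "y' = y" using y psiw_inj by metis
      then show "good (\<lambda>i. bc i y') (\<alpha> n) (\<sigma> I1) (\<sigma> I2)" using g \<sigma> by simp
    qed
    then show ?thesis by blast
  next
    case False
    have "\<exists>P Q. good (\<lambda>i. if i = I1 then 1 else 0) (\<alpha> n) P Q"
      by (rule pair_exists[of _ I1]) auto
    then obtain P Q where g: "good (\<lambda>i. if i = I1 then 1 else 0) (\<alpha> n) P Q" by blast
    then have "P \<noteq> Q" unfolding good_def by simp
    then obtain \<sigma> where \<sigma>: "\<sigma> permutes UNIV" "\<sigma> I1 = P" "\<sigma> I2 = Q" using perm_of_pair by blast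
    have "ok n \<sigma>" unfolding ok_def using \<sigma> g False unfolding good_def by auto
    then show ?thesis by blast
  qed
  define \<sigma> where "\<sigma> = (\<lambda>n. SOME \<sigma>. ok n \<sigma>)"
  have ok\<sigma>: "ok n (\<sigma> n)" for n unfolding \<sigma>_def using exok[of n] by (rule someI_ex)
  have pdiff: "psiw w (Suc n) a - psiw w (Suc n) b = D n *v (a - b)" for n a b
    unfolding D_def by (rule psiw_diff)
  show ?thesis
  proof (rule exI[of _ \<sigma>], intro conjI allI)
    show "\<sigma> n permutes UNIV" for n using ok\<sigma>[of n] unfolding ok_def by blast
    let ?A = "\<lambda>n. psiw w (Suc n) (vtx (\<sigma> n I1))"
    let ?B = "\<lambda>n. psiw w (Suc n) (vtx (\<sigma> n I2))"
    let ?C = "\<lambda>n. psiw w (Suc n) (vtx (\<sigma> n I3))"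
    have part1a: "eventually (\<lambda>n. norm (projP (v x) (?A n - ?B n)) \<noteq> 0) sequentially"
      and part1b: "(\<lambda>n. max (norm (projPerp (v x) (?A n - ?B n)))
                 (max (norm (projPerp (v x) (?B n - ?C n))) (norm (projPerp (v x) (?C n - ?A n))))
            / norm (projP (v x) (?A n - ?B n))) \<longlonglongrightarrow> 0"
    proof -
      have b: "norm (projP V (D n *v (vtx (\<sigma> n I1) - vtx (\<sigma> n I2)))) \<noteq> 0 \<and>
          max (norm (projPerp V (D n *v (vtx (\<sigma> n I1) - vtx (\<sigma> n I2)))))
            (max (norm (projPerp V (D n *v (vtx (\<sigma> n I2) - vtx (\<sigma> n I3))))) (norm (projPerp V (D n *v (vtx (\<sigma> n I3) - vtx (\<sigma> n I1))))))
          / norm (projP V (D n *v (vtx (\<sigma> n I1) - vtx (\<sigma> n I2)))) \<le> 90 * E n"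
        if "\<rho> n > 1/2" for n
      proof -
        have sp: "\<bar>q n \<bullet> vtx (\<sigma> n I2) - q n \<bullet> vtx (\<sigma> n I1)\<bar> \<ge> Dl (\<lambda>i. q n \<bullet> vtx i) / 15"
          using ok\<sigma>[of n] unfolding ok_def \<alpha>_def by simp
        show ?thesis
          using edge_bound[OF V qpos[OF that, unfolded q_def] hE[OF that, unfolded q_def] E0[OF that] sp[unfolded q_def]] by blast
      qed
      show "eventually (\<lambda>n. norm (projP (v x) (?A n - ?B n)) \<noteq> 0) sequentially"
        using ev by eventually_elim (unfold pdiff, use b in \<open>simp add: V_def\<close>)
      show "(\<lambda>n. max (norm (projPerp (v x) (?A n - ?B n)))
                 (max (norm (projPerp (v x) (?B n - ?C n))) (norm (projPerp (v x) (?C n - ?A n))))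
            / norm (projP (v x) (?A n - ?B n))) \<longlonglongrightarrow> 0"
      proof (rule tendsto_sandwich[of "\<lambda>_. 0" _ _ "\<lambda>n. 90 * E n"])
        show "eventually (\<lambda>n. 0 \<le> max (norm (projPerp (v x) (?A n - ?B n)))
                 (max (norm (projPerp (v x) (?B n - ?C n))) (norm (projPerp (v x) (?C n - ?A n))))
            / norm (projP (v x) (?A n - ?B n))) sequentially"
          by (intro always_eventually allI divide_nonneg_nonneg) (auto simp: le_max_iff_disj)
        show "eventually (\<lambda>n. max (norm (projPerp (v x) (?A n - ?B n)))
                 (max (norm (projPerp (v x) (?B n - ?C n))) (norm (projPerp (v x) (?C n - ?A n))))
            / norm (projP (v x) (?A n - ?B n)) \<le> 90 * E n) sequentially"
          using ev by eventually_elim (unfold pdiff, use b in \<open>simp add: V_def\<close>)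
        show "(\<lambda>_. 0::real) \<longlonglongrightarrow> 0" by simp
        show "(\<lambda>n. 90 * E n) \<longlonglongrightarrow> 0" using Elim by (intro tendsto_mult_right_zero)
      qed
    qed
    have part2: "eventually (\<lambda>k. norm (projP (v x) (x - ?A (nk k))) \<noteq> 0 \<and>
                        norm (projP (v x) (x - ?B (nk k))) \<noteq> 0) sequentially \<and>
        (\<lambda>k. max (norm (projPerp (v x) (x - ?A (nk k))) / norm (projP (v x) (x - ?A (nk k))))
                  (norm (projPerp (v x) (x - ?B (nk k))) / norm (projP (v x) (x - ?B (nk k)))))
          \<longlonglongrightarrow> 0"
      if prem: "\<theta> \<in> {0<..\<theta>0} \<and> strict_mono nk \<and> (\<forall>k. x \<in> psiw w (Suc (nk k)) ` S_theta \<theta>)" for \<theta> nk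
    proof -
      have mono: "strict_mono nk" using prem by blast
      have "\<forall>k. \<exists>y. y \<in> S_theta \<theta> \<and> x = psiw w (Suc (nk k)) y" using prem by blast
      then obtain y where y: "\<And>k. y k \<in> S_theta \<theta>" "\<And>k. x = psiw w (Suc (nk k)) (y k)" by metis
      have yH: "y k \<in> HSG" for k using y(1)[of k] unfolding S_theta_def by blast
      have yT: "y k \<in> triangle" for k using yH HSG_tri by blast
      have lt1: "bc P (y k) < 1" for P k
      proof (rule ccontr)
        assume "\<not> bc P (y k) < 1"
        then have "bc P (y k) = 1" using bc_le1[of "y k" P] yT[of k] tri_iff by force
        then have "y k = vtx P" using bc_one yT by blast
        then have "x = psiw w (Suc (nk k)) (vtx P)" using y(2)[of k] by simp
        then have "x \<in> Nset" unfolding Nset_def by blast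
        then show False using xN by blast
      qed
      have gd: "good (\<lambda>i. bc i (y k)) (\<alpha> (nk k)) (\<sigma> (nk k) I1) (\<sigma> (nk k) I2)" for k
        using ok\<sigma>[of "nk k"] yH[of k] y(2)[of k] unfolding ok_def by blast
      have xd: "x - psiw w (Suc (nk k)) (vtx P) = D (nk k) *v (y k - vtx P)" for k P
        using y(2)[of k] pdiff by metis
      have vb: "norm (projP V (D n *v (y k - vtx P))) \<noteq> 0 \<and>
          norm (projPerp V (D n *v (y k - vtx P))) / norm (projP V (D n *v (y k - vtx P))) \<le> 90 * E n"
        if "\<rho> n > 1/2" "n = nk k" "P = \<sigma> n I1 \<or> P = \<sigma> n I2" for n k P
      proof -
        have "\<bar>GG (\<lambda>i. bc i (y k)) (\<lambda>i. q n \<bullet> vtx i) P\<bar> \<ge> Dl (\<lambda>i. q n \<bullet> vtx i) / 15 * (1 - bc P (y k))"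
          using gd[of k] that(2,3) unfolding good_def \<alpha>_def by blast
        then show ?thesis unfolding q_def
          using vert_bound[OF V qpos[OF that(1), unfolded q_def] hE[OF that(1), unfolded q_def] E0[OF that(1)] yT[of k] lt1[of P k]]
          by blast
      qed
      have evk: "eventually (\<lambda>k. \<rho> (nk k) > 1/2) sequentially"
        by (rule eventually_compose_filterlim[OF ev filterlim_subseq[OF mono]])
      have Ek: "(\<lambda>k. E (nk k)) \<longlonglongrightarrow> 0"
        using LIMSEQ_subseq_LIMSEQ[OF Elim mono] by (simp add: o_def)
      show ?thesis
      proof
        show "eventually (\<lambda>k. norm (projP (v x) (x - ?A (nk k))) \<noteq> 0 \<and>
                        norm (projP (v x) (x - ?B (nk k))) \<noteq> 0) sequentially"
          using evk by eventually_elim (unfold xd, use vb in \<open>auto simp: V_def\<close>)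
        show "(\<lambda>k. max (norm (projPerp (v x) (x - ?A (nk k))) / norm (projP (v x) (x - ?A (nk k))))
                  (norm (projPerp (v x) (x - ?B (nk k))) / norm (projP (v x) (x - ?B (nk k)))))
          \<longlonglongrightarrow> 0"
        proof (rule tendsto_sandwich[of "\<lambda>_. 0" _ _ "\<lambda>k. 90 * E (nk k)"])
          show "eventually (\<lambda>k. 0 \<le> max (norm (projPerp (v x) (x - ?A (nk k))) / norm (projP (v x) (x - ?A (nk k))))
                  (norm (projPerp (v x) (x - ?B (nk k))) / norm (projP (v x) (x - ?B (nk k))))) sequentially"
            by (simp add: le_max_iff_disj)
          show "eventually (\<lambda>k. max (norm (projPerp (v x) (x - ?A (nk k))) / norm (projP (v x) (x - ?A (nk k))))
                  (norm (projPerp (v x) (x - ?B (nk k))) / norm (projP (v x) (x - ?B (nk k)))) \<le> 90 * E (nk k)) sequentially"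
            using evk by eventually_elim (unfold xd, use vb in \<open>auto simp: V_def\<close>)
          show "(\<lambda>_. 0::real) \<longlonglongrightarrow> 0" by simp
          show "(\<lambda>k. 90 * E (nk k)) \<longlonglongrightarrow> 0" using Ek by (intro tendsto_mult_right_zero)
        qed
      qed
    qed
    show "let An = ?A; Bn = ?B; Cn = ?C in
      (eventually (\<lambda>n. norm (projP (v x) (An n - Bn n)) \<noteq> 0) sequentially \<and>
       (\<lambda>n. max (norm (projPerp (v x) (An n - Bn n)))
                 (max (norm (projPerp (v x) (Bn n - Cn n))) (norm (projPerp (v x) (Cn n - An n))))
            / norm (projP (v x) (An n - Bn n))) \<longlonglongrightarrow> 0) \<and>
      (\<forall>\<theta> (nk :: nat \<Rightarrow> nat). \<theta> \<in> {0<..\<theta>0} \<and> strict_mono nk \<and>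
          (\<forall>k. x \<in> psiw w (Suc (nk k)) ` S_theta \<theta>) \<longrightarrow>
        eventually (\<lambda>k. norm (projP (v x) (x - An (nk k))) \<noteq> 0 \<and>
                        norm (projP (v x) (x - Bn (nk k))) \<noteq> 0) sequentially \<and>
        (\<lambda>k. max (norm (projPerp (v x) (x - An (nk k))) / norm (projP (v x) (x - An (nk k))))
                  (norm (projPerp (v x) (x - Bn (nk k))) / norm (projP (v x) (x - Bn (nk k)))))
          \<longlonglongrightarrow> 0)"
      unfolding Let_def using part1a part1b part2 by blast
  qed
qed

end
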